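(* For any $n$-qubit pure state $\ket{\psi}$, $\Lambda_{\max}(\ket{\psi})\le\sqrt{1-\frac{\mathcal{C}(\ket{\psi})^2}{2}}$, and hence $E_g(\ket{\psi})\ge\frac{\mathcal{C}(\ket{\psi})^2}{2}$.
   Context: $\Lambda_{\max}(\ket{\psi})=\max|\langle\phi|\psi\rangle|$, the maximum over fully product states $\ket{\phi}=\bigotimes_{i=1}^n\ket{a_i}$ of single-qubit pure states; the geometric measure of entanglement is $E_g(\ket{\psi})=1-\Lambda_{\max}(\ket{\psi})^2$. $\mathcal{C}(\ket{\psi})=1-\frac{1}{2^{n}}\sum_{\alpha\subseteq [n]}\mathrm{Tr}[\rho_\alpha^2]$, with $\rho_\alpha$ the reduced state on $\alpha$ and $\mathrm{Tr}[\rho_\emptyset^2]=1$. *)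

theory Defs
  imports "HOL-Analysis.Analysis"
begin

text \<open>An n-qubit state is a function from computational basis labels to amplitudes.
  A basis label is a subset S of {0..<n}: the set of qubits in state |1>.
  Only the values on Pow {0..<n} matter.\<close>

type_synonym qstate = "nat set \<Rightarrow> complex"

definition normalized :: "nat \<Rightarrow> qstate \<Rightarrow> bool" where
  "normalized n \<psi> \<longleftrightarrow> (\<Sum>S\<in>Pow {0..<n}. (cmod (\<psi> S))\<^sup>2) = 1"

definition product_amp :: "nat \<Rightarrow> (nat \<Rightarrow> complex) \<Rightarrow> (nat \<Rightarrow> complex) \<Rightarrow> qstate" where
  "product_amp n a0 a1 S = (\<Prod>i\<in>{0..<n}. if i \<in> S then a1 i else a0 i)"

definition inner_q :: "nat \<Rightarrow> qstate \<Rightarrow> qstate \<Rightarrow> complex" where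
  "inner_q n \<phi> \<psi> = (\<Sum>S\<in>Pow {0..<n}. cnj (\<phi> S) * \<psi> S)"

definition Lambda_max :: "nat \<Rightarrow> qstate \<Rightarrow> real" where
  "Lambda_max n \<psi> = Sup {cmod (inner_q n (product_amp n a0 a1) \<psi>) | a0 a1.
      \<forall>i<n. (cmod (a0 i))\<^sup>2 + (cmod (a1 i))\<^sup>2 = 1}"

definition geom_ent :: "nat \<Rightarrow> qstate \<Rightarrow> real" where
  "geom_ent n \<psi> = 1 - (Lambda_max n \<psi>)\<^sup>2"

text \<open>Reduced density matrix on subsystem alpha, entries indexed by x, x' \<subseteq> alpha.\<close>
definition reduced :: "nat \<Rightarrow> qstate \<Rightarrow> nat set \<Rightarrow> nat set \<Rightarrow> nat set \<Rightarrow> complex" where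
  "reduced n \<psi> \<alpha> x x' = (\<Sum>y\<in>Pow ({0..<n} - \<alpha>). \<psi> (x \<union> y) * cnj (\<psi> (x' \<union> y)))"

definition purity :: "nat \<Rightarrow> qstate \<Rightarrow> nat set \<Rightarrow> real" where
  "purity n \<psi> \<alpha> = (if \<alpha> = {} then 1 else
     Re (\<Sum>x\<in>Pow \<alpha>. \<Sum>x'\<in>Pow \<alpha>. reduced n \<psi> \<alpha> x x' * reduced n \<psi> \<alpha> x' x))"

definition concentratable :: "nat \<Rightarrow> qstate \<Rightarrow> real" where
  "concentratable n \<psi> = 1 - (1 / 2 ^ n) * (\<Sum>\<alpha>\<in>Pow {0..<n}. purity n \<psi> \<alpha>)"

end

theory Submission
  imports Defs
begin

lemma sum_Pow_union:
  fixes f :: "'a set \<Rightarrow> 'b::comm_monoid_add"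
  assumes "finite A" "finite B" "A \<inter> B = {}"
  shows "(\<Sum>S\<in>Pow (A \<union> B). f S) = (\<Sum>x\<in>Pow A. \<Sum>y\<in>Pow B. f (x \<union> y))"
proof -
  have inj: "inj_on (\<lambda>(x,y). x \<union> y) (Pow A \<times> Pow B)"
    using assms(3) by (auto simp: inj_on_def) blast+
  have img: "(\<lambda>(x,y). x \<union> y) ` (Pow A \<times> Pow B) = Pow (A \<union> B)"
  proof
    show "Pow (A \<union> B) \<subseteq> (\<lambda>(x,y). x \<union> y) ` (Pow A \<times> Pow B)"
    proof
      fix S assume "S \<in> Pow (A \<union> B)"
      then have "S = (\<lambda>(x,y). x \<union> y) (S \<inter> A, S \<inter> B)" by auto
      moreover have "(S \<inter> A, S \<inter> B) \<in> Pow A \<times> Pow B" by auto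
      ultimately show "S \<in> (\<lambda>(x,y). x \<union> y) ` (Pow A \<times> Pow B)" by blast
    qed
  qed auto
  have "(\<Sum>S\<in>Pow (A \<union> B). f S) = (\<Sum>p\<in>Pow A \<times> Pow B. f ((\<lambda>(x,y). x \<union> y) p))"
    using sum.reindex[OF inj, of f] img by (simp add: comp_def)
  also have "\<dots> = (\<Sum>x\<in>Pow A. \<Sum>y\<in>Pow B. f (x \<union> y))"
    by (simp add: sum.cartesian_product case_prod_beta)
  finally show ?thesis .
qed

lemma sum_Pow_prod_if:
  fixes f g :: "'a \<Rightarrow> 'c::comm_semiring_1"
  assumes "finite A"
  shows "(\<Sum>X\<in>Pow A. \<Prod>i\<in>A. if i \<in> X then f i else g i) = (\<Prod>i\<in>A. f i + g i)"
proof -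
  have "\<And>X. X \<in> Pow A \<Longrightarrow> (\<Prod>i\<in>A. if i \<in> X then f i else g i) = (\<Prod>i\<in>X. f i) * (\<Prod>i\<in>A-X. g i)"
  proof -
    fix X assume "X \<in> Pow A"
    then have "A \<inter> {x. x \<in> X} = X" "A \<inter> - {x. x \<in> X} = A - X" by auto
    then show "(\<Prod>i\<in>A. if i \<in> X then f i else g i) = (\<Prod>i\<in>X. f i) * (\<Prod>i\<in>A-X. g i)"
      using prod.If_cases[OF assms, of "\<lambda>x. x \<in> X" f g] by simp
  qed
  then have "(\<Sum>X\<in>Pow A. \<Prod>i\<in>A. if i \<in> X then f i else g i) = (\<Sum>X\<in>Pow A. (\<Prod>i\<in>X. f i) * (\<Prod>i\<in>A-X. g i))"
    by (intro sum.cong) auto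
  then show ?thesis using prod_add[OF assms, of f g] by simp
qed

lemma CS_double:
  fixes a b :: "'x \<Rightarrow> 'y \<Rightarrow> real"
  shows "(\<Sum>x\<in>I. \<Sum>y\<in>J. a x y * b x y)\<^sup>2 \<le> (\<Sum>x\<in>I. \<Sum>y\<in>J. (a x y)\<^sup>2) * (\<Sum>x\<in>I. \<Sum>y\<in>J. (b x y)\<^sup>2)"
proof (cases "finite I \<and> finite J")
  case True
  then show ?thesis
    using Cauchy_Schwarz_ineq_sum[of "\<lambda>p. a (fst p) (snd p)" "\<lambda>p. b (fst p) (snd p)" "I \<times> J"]
    by (simp add: sum.cartesian_product case_prod_beta)
next
  case False
  then show ?thesis by (auto)
qed

lemma alg: fixes s :: real assumes "0 \<le> s" "s \<le> 1" shows "(1 - s\<^sup>2)\<^sup>2 \<le> 2 * (1 - s)"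
proof -
  have "(1 - s\<^sup>2)\<^sup>2 = (1 - s) * ((1 - s) * (1 + s)\<^sup>2)" by (simp add: power2_eq_square algebra_simps)
  also have "(1 - s) * (1 + s)\<^sup>2 \<le> 2"
  proof -
    have "(1 - s) * (1 + s)\<^sup>2 = (1 - s\<^sup>2) * (1 + s)" by (simp add: power2_eq_square algebra_simps)
    also have "\<dots> \<le> 1 * 2" using assms by (intro mult_mono) (auto simp: power2_eq_square)
    finally show ?thesis by simp
  qed
  then have "(1 - s) * ((1 - s) * (1 + s)\<^sup>2) \<le> (1 - s) * 2" using assms by (intro mult_left_mono) auto
  finally show ?thesis by simp
qed


lemma key:
  fixes n :: nat and \<psi> :: qstate
  assumes norm: "normalized n \<psi>" and al: "\<alpha> \<subseteq> {0..<n}"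
    and unit: "\<forall>i<n. (cmod (a0 i))\<^sup>2 + (cmod (a1 i))\<^sup>2 = 1"
  shows "(cmod (inner_q n (product_amp n a0 a1) \<psi>))^4
           \<le> Re (\<Sum>x\<in>Pow \<alpha>. \<Sum>x'\<in>Pow \<alpha>. reduced n \<psi> \<alpha> x x' * reduced n \<psi> \<alpha> x' x)
    \<and> Re (\<Sum>x\<in>Pow \<alpha>. \<Sum>x'\<in>Pow \<alpha>. reduced n \<psi> \<alpha> x x' * reduced n \<psi> \<alpha> x' x) \<le> 1"
proof -
  define B where "B = {0..<n} - \<alpha>"
  have fA: "finite \<alpha>" using al finite_subset by blast
  have fB: "finite B" by (simp add: B_def)
  have disj: "\<alpha> \<inter> B = {}" by (auto simp: B_def)
  have un: "\<alpha> \<union> B = {0..<n}" using al by (auto simp: B_def)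
  define \<rho> where "\<rho> = reduced n \<psi> \<alpha>"
  have \<rho>_def': "\<rho> x x' = (\<Sum>y\<in>Pow B. \<psi> (x \<union> y) * cnj (\<psi> (x' \<union> y)))" for x x'
    by (simp add: \<rho>_def reduced_def B_def)
  have herm: "\<rho> x' x = cnj (\<rho> x x')" for x x'
    by (simp add: \<rho>_def' mult.commute)
  define P where "P = (\<Sum>x\<in>Pow \<alpha>. \<Sum>x'\<in>Pow \<alpha>. (cmod (\<rho> x x'))\<^sup>2)"
  have Peq: "Re (\<Sum>x\<in>Pow \<alpha>. \<Sum>x'\<in>Pow \<alpha>. \<rho> x x' * \<rho> x' x) = P"
  proof -
    have "\<rho> x x' * \<rho> x' x = of_real ((cmod (\<rho> x x'))\<^sup>2)" for x x'
      unfolding herm[where x=x and x'=x'] by (rule complex_norm_square[symmetric])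
    then show ?thesis unfolding P_def by (simp add: Re_sum)
  qed
  define d where "d x = (\<Sum>y\<in>Pow B. (cmod (\<psi> (x \<union> y)))\<^sup>2)" for x
  have d1: "(\<Sum>x\<in>Pow \<alpha>. d x) = 1"
    using norm sum_Pow_union[OF fA fB disj, of "\<lambda>S. (cmod (\<psi> S))\<^sup>2"] un
    by (simp add: normalized_def d_def)
  have d0: "d x \<ge> 0" for x by (simp add: d_def sum_nonneg)
  have rb: "(cmod (\<rho> x x'))\<^sup>2 \<le> d x * d x'" for x x'
  proof -
    have "cmod (\<rho> x x') \<le> (\<Sum>y\<in>Pow B. cmod (\<psi> (x \<union> y)) * cmod (\<psi> (x' \<union> y)))"
      unfolding \<rho>_def' by (rule order.trans[OF norm_sum]) (simp add: norm_mult)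
    then have "(cmod (\<rho> x x'))\<^sup>2 \<le> (\<Sum>y\<in>Pow B. cmod (\<psi> (x \<union> y)) * cmod (\<psi> (x' \<union> y)))\<^sup>2"
      by (intro power_mono) auto
    also have "\<dots> \<le> d x * d x'" unfolding d_def by (rule Cauchy_Schwarz_ineq_sum)
    finally show ?thesis .
  qed
  have Ple: "P \<le> 1"
  proof -
    have "P \<le> (\<Sum>x\<in>Pow \<alpha>. \<Sum>x'\<in>Pow \<alpha>. d x * d x')"
      unfolding P_def by (intro sum_mono rb)
    also have "\<dots> = (\<Sum>x\<in>Pow \<alpha>. d x) * (\<Sum>x\<in>Pow \<alpha>. d x)" by (simp add: sum_product)
    finally show ?thesis using d1 by simp
  qed
  define u where "u x = (\<Prod>i\<in>\<alpha>. if i \<in> x then a1 i else a0 i)" for x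
  define v where "v y = (\<Prod>i\<in>B. if i \<in> y then a1 i else a0 i)" for y
  have pa: "product_amp n a0 a1 (x \<union> y) = u x * v y" if "x \<subseteq> \<alpha>" "y \<subseteq> B" for x y
  proof -
    have "product_amp n a0 a1 (x \<union> y) = (\<Prod>i\<in>\<alpha> \<union> B. if i \<in> x \<union> y then a1 i else a0 i)"
      by (simp add: product_amp_def un)
    also have "\<dots> = (\<Prod>i\<in>\<alpha>. if i \<in> x \<union> y then a1 i else a0 i) * (\<Prod>i\<in>B. if i \<in> x \<union> y then a1 i else a0 i)"
      by (rule prod.union_disjoint[OF fA fB disj])
    also have "(\<Prod>i\<in>\<alpha>. if i \<in> x \<union> y then a1 i else a0 i) = u x"
      unfolding u_def using that disj by (intro prod.cong) auto
    also have "(\<Prod>i\<in>B. if i \<in> x \<union> y then a1 i else a0 i) = v y"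
      unfolding v_def using that disj by (intro prod.cong) auto
    finally show ?thesis .
  qed
  have unorm: "(\<Sum>x\<in>Pow \<alpha>. (cmod (u x))\<^sup>2) = 1"
  proof -
    have "(cmod (u x))\<^sup>2 = (\<Prod>i\<in>\<alpha>. if i \<in> x then (cmod (a1 i))\<^sup>2 else (cmod (a0 i))\<^sup>2)" for x
      unfolding u_def prod_norm[symmetric] prod_power_distrib by (intro prod.cong) auto
    then have "(\<Sum>x\<in>Pow \<alpha>. (cmod (u x))\<^sup>2) = (\<Prod>i\<in>\<alpha>. (cmod (a1 i))\<^sup>2 + (cmod (a0 i))\<^sup>2)"
      using sum_Pow_prod_if[OF fA] by simp
    also have "\<dots> = 1" using unit al by (intro prod.neutral) (auto simp: add.commute)
    finally show ?thesis .
  qed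
  have vnorm: "(\<Sum>y\<in>Pow B. (cmod (v y))\<^sup>2) = 1"
  proof -
    have "(cmod (v x))\<^sup>2 = (\<Prod>i\<in>B. if i \<in> x then (cmod (a1 i))\<^sup>2 else (cmod (a0 i))\<^sup>2)" for x
      unfolding v_def prod_norm[symmetric] prod_power_distrib by (intro prod.cong) auto
    then have "(\<Sum>x\<in>Pow B. (cmod (v x))\<^sup>2) = (\<Prod>i\<in>B. (cmod (a1 i))\<^sup>2 + (cmod (a0 i))\<^sup>2)"
      using sum_Pow_prod_if[OF fB] by simp
    also have "\<dots> = 1" using unit by (intro prod.neutral) (auto simp: add.commute B_def)
    finally show ?thesis .
  qed
  define w where "w y = (\<Sum>x\<in>Pow \<alpha>. cnj (u x) * \<psi> (x \<union> y))" for y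
  have inner: "inner_q n (product_amp n a0 a1) \<psi> = (\<Sum>y\<in>Pow B. cnj (v y) * w y)"
  proof -
    have "inner_q n (product_amp n a0 a1) \<psi>
        = (\<Sum>x\<in>Pow \<alpha>. \<Sum>y\<in>Pow B. cnj (product_amp n a0 a1 (x \<union> y)) * \<psi> (x \<union> y))"
      unfolding inner_q_def un[symmetric] by (rule sum_Pow_union[OF fA fB disj])
    also have "\<dots> = (\<Sum>x\<in>Pow \<alpha>. \<Sum>y\<in>Pow B. cnj (v y) * (cnj (u x) * \<psi> (x \<union> y)))"
      by (intro sum.cong refl) (simp add: pa)
    also have "\<dots> = (\<Sum>y\<in>Pow B. \<Sum>x\<in>Pow \<alpha>. cnj (v y) * (cnj (u x) * \<psi> (x \<union> y)))"
      by (rule sum.swap)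
    also have "\<dots> = (\<Sum>y\<in>Pow B. cnj (v y) * w y)"
      by (simp add: w_def sum_distrib_left)
    finally show ?thesis .
  qed
  define t where "t = cmod (inner_q n (product_amp n a0 a1) \<psi>)"
  have t0: "t \<ge> 0" by (simp add: t_def)
  have t1: "t \<le> (\<Sum>y\<in>Pow B. cmod (v y) * cmod (w y))"
    unfolding t_def inner by (rule order.trans[OF norm_sum]) (simp add: norm_mult)
  have t2: "t\<^sup>2 \<le> (\<Sum>y\<in>Pow B. (cmod (w y))\<^sup>2)"
  proof -
    have "t\<^sup>2 \<le> (\<Sum>y\<in>Pow B. cmod (v y) * cmod (w y))\<^sup>2" using t0 t1 by (intro power_mono) auto
    also have "\<dots> \<le> (\<Sum>y\<in>Pow B. (cmod (v y))\<^sup>2) * (\<Sum>y\<in>Pow B. (cmod (w y))\<^sup>2)"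
      by (rule Cauchy_Schwarz_ineq_sum)
    finally show ?thesis using vnorm by simp
  qed
  have weq: "(\<Sum>y\<in>Pow B. (cmod (w y))\<^sup>2) = Re (\<Sum>x\<in>Pow \<alpha>. \<Sum>x'\<in>Pow \<alpha>. cnj (u x) * u x' * \<rho> x x')"
  proof -
    have "(\<Sum>y\<in>Pow B. w y * cnj (w y))
        = (\<Sum>y\<in>Pow B. \<Sum>x'\<in>Pow \<alpha>. \<Sum>x\<in>Pow \<alpha>. cnj (u x) * u x' * (\<psi> (x \<union> y) * cnj (\<psi> (x' \<union> y))))"
      by (simp add: w_def sum_product cnj_sum mult_ac)
    also have "\<dots> = (\<Sum>y\<in>Pow B. \<Sum>x\<in>Pow \<alpha>. \<Sum>x'\<in>Pow \<alpha>. cnj (u x) * u x' * (\<psi> (x \<union> y) * cnj (\<psi> (x' \<union> y))))"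
      by (intro sum.cong refl sum.swap)
    also have "\<dots> = (\<Sum>x\<in>Pow \<alpha>. \<Sum>y\<in>Pow B. \<Sum>x'\<in>Pow \<alpha>. cnj (u x) * u x' * (\<psi> (x \<union> y) * cnj (\<psi> (x' \<union> y))))"
      by (rule sum.swap)
    also have "\<dots> = (\<Sum>x\<in>Pow \<alpha>. \<Sum>x'\<in>Pow \<alpha>. \<Sum>y\<in>Pow B. cnj (u x) * u x' * (\<psi> (x \<union> y) * cnj (\<psi> (x' \<union> y))))"
      by (intro sum.cong refl sum.swap)
    also have "\<dots> = (\<Sum>x\<in>Pow \<alpha>. \<Sum>x'\<in>Pow \<alpha>. cnj (u x) * u x' * \<rho> x x')"
      by (simp add: \<rho>_def' sum_distrib_left)
    finally have "(\<Sum>y\<in>Pow B. w y * cnj (w y)) = (\<Sum>x\<in>Pow \<alpha>. \<Sum>x'\<in>Pow \<alpha>. cnj (u x) * u x' * \<rho> x x')" .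
    moreover have "(\<Sum>y\<in>Pow B. (cmod (w y))\<^sup>2) = Re (\<Sum>y\<in>Pow B. w y * cnj (w y))"
      by (simp add: Re_sum complex_norm_square[symmetric] del: of_real_power)
    ultimately show ?thesis by simp
  qed
  define Q where "Q = (\<Sum>x\<in>Pow \<alpha>. \<Sum>x'\<in>Pow \<alpha>. (cmod (u x) * cmod (u x')) * cmod (\<rho> x x'))"
  have tQ: "t\<^sup>2 \<le> Q"
  proof -
    have "Re (\<Sum>x\<in>Pow \<alpha>. \<Sum>x'\<in>Pow \<alpha>. cnj (u x) * u x' * \<rho> x x')
        \<le> cmod (\<Sum>x\<in>Pow \<alpha>. \<Sum>x'\<in>Pow \<alpha>. cnj (u x) * u x' * \<rho> x x')"
      by (rule complex_Re_le_cmod)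
    also have "\<dots> \<le> (\<Sum>x\<in>Pow \<alpha>. cmod (\<Sum>x'\<in>Pow \<alpha>. cnj (u x) * u x' * \<rho> x x'))"
      by (rule norm_sum)
    also have "\<dots> \<le> Q" unfolding Q_def
      by (intro sum_mono order.trans[OF norm_sum]) (simp add: norm_mult)
    finally show ?thesis using t2 weq by simp
  qed
  have QP: "Q\<^sup>2 \<le> P"
  proof -
    have "Q\<^sup>2 \<le> (\<Sum>x\<in>Pow \<alpha>. \<Sum>x'\<in>Pow \<alpha>. (cmod (u x) * cmod (u x'))\<^sup>2) * P"
      unfolding Q_def P_def by (rule CS_double)
    also have "(\<Sum>x\<in>Pow \<alpha>. \<Sum>x'\<in>Pow \<alpha>. (cmod (u x) * cmod (u x'))\<^sup>2)
       = (\<Sum>x\<in>Pow \<alpha>. (cmod (u x))\<^sup>2) * (\<Sum>x\<in>Pow \<alpha>. (cmod (u x))\<^sup>2)"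
      by (simp add: sum_product power_mult_distrib)
    finally show ?thesis using unorm by simp
  qed
  have "t^4 \<le> P"
  proof -
    have "t^4 = (t\<^sup>2)\<^sup>2" by simp
    also have "\<dots> \<le> Q\<^sup>2" using tQ t0 by (intro power_mono) auto
    finally show ?thesis using QP by simp
  qed
  then show ?thesis using Ple Peq unfolding t_def \<rho>_def by simp
qed


lemma purity_bounds:
  fixes n :: nat and \<psi> :: qstate
  assumes norm: "normalized n \<psi>" and al: "\<alpha> \<subseteq> {0..<n}"
    and unit: "\<forall>i<n. (cmod (a0 i))\<^sup>2 + (cmod (a1 i))\<^sup>2 = 1"
  shows "(cmod (inner_q n (product_amp n a0 a1) \<psi>))^4 \<le> purity n \<psi> \<alpha> \<and> purity n \<psi> \<alpha> \<le> 1"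
  using key[OF assms] by (auto simp: purity_def)

lemma conc_bounds:
  fixes n :: nat and \<psi> :: qstate
  assumes norm: "normalized n \<psi>"
    and unit: "\<forall>i<n. (cmod (a0 i))\<^sup>2 + (cmod (a1 i))\<^sup>2 = 1"
  shows "0 \<le> concentratable n \<psi> \<and> concentratable n \<psi> \<le> 1 - (cmod (inner_q n (product_amp n a0 a1) \<psi>))^4"
proof -
  define t where "t = cmod (inner_q n (product_amp n a0 a1) \<psi>)"
  have pb: "\<alpha> \<in> Pow {0..<n} \<Longrightarrow> t^4 \<le> purity n \<psi> \<alpha> \<and> purity n \<psi> \<alpha> \<le> 1" for \<alpha>
    using purity_bounds[OF norm _ unit] unfolding t_def by blast
  have card: "card (Pow {0..<n::nat}) = 2^n" by (simp add: card_Pow)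
  have up: "(\<Sum>\<alpha>\<in>Pow {0..<n}. purity n \<psi> \<alpha>) \<le> 2^n"
  proof -
    have "(\<Sum>\<alpha>\<in>Pow {0..<n}. purity n \<psi> \<alpha>) \<le> (\<Sum>\<alpha>\<in>Pow {0..<n}. 1)"
      using pb by (intro sum_mono) auto
    then show ?thesis using card by simp
  qed
  have lo: "2^n * t^4 \<le> (\<Sum>\<alpha>\<in>Pow {0..<n}. purity n \<psi> \<alpha>)"
  proof -
    have "(\<Sum>\<alpha>\<in>Pow {0..<n}. t^4) \<le> (\<Sum>\<alpha>\<in>Pow {0..<n}. purity n \<psi> \<alpha>)"
      using pb by (intro sum_mono) auto
    then show ?thesis using card by simp
  qed
  have pos: "(0::real) < 2^n" by simp
  show ?thesis using up lo pos unfolding concentratable_def t_def[symmetric]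
    by (auto simp: field_simps)
qed

theorem mainTheorem15:
  fixes n :: nat and \<psi> :: qstate
  assumes "normalized n \<psi>"
  shows "Lambda_max n \<psi> \<le> sqrt (1 - (concentratable n \<psi>)\<^sup>2 / 2)
    \<and> geom_ent n \<psi> \<ge> (concentratable n \<psi>)\<^sup>2 / 2"
proof -
  define C where "C = concentratable n \<psi>"
  define S where "S = {cmod (inner_q n (product_amp n a0 a1) \<psi>) | a0 a1.
      \<forall>i<n. (cmod (a0 i))\<^sup>2 + (cmod (a1 i))\<^sup>2 = 1}"
  have L: "Lambda_max n \<psi> = Sup S" by (simp add: Lambda_max_def S_def)
  have el: "s \<in> S \<Longrightarrow> 0 \<le> s \<and> s \<le> 1 \<and> 0 \<le> C \<and> C \<le> 1 - s^4" for s
  proof -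
    assume "s \<in> S"
    then obtain a0 a1 where s: "s = cmod (inner_q n (product_amp n a0 a1) \<psi>)"
      and u: "\<forall>i<n. (cmod (a0 i))\<^sup>2 + (cmod (a1 i))\<^sup>2 = 1" unfolding S_def by blast
    have c: "0 \<le> C \<and> C \<le> 1 - s^4" using conc_bounds[OF assms u] s C_def by simp
    have s0: "0 \<le> s" using s by simp
    have "s^4 \<le> 1" using c by simp
    then have "s \<le> 1" using s0 by (metis power_le_one_iff zero_neq_numeral)
    then show ?thesis using c s0 by simp
  qed
  have sq: "s \<le> sqrt (1 - C\<^sup>2 / 2)" if "s \<in> S" for s
  proof -
    from el[OF that] have h: "0 \<le> s" "s \<le> 1" "0 \<le> C" "C \<le> 1 - s^4" by auto
    have s2: "0 \<le> s\<^sup>2" "s\<^sup>2 \<le> 1" using h by (auto simp: power_le_one)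
    have "C\<^sup>2 \<le> (1 - s^4)\<^sup>2" using h by (intro power_mono) auto
    also have "(1 - s^4) = 1 - (s\<^sup>2)\<^sup>2" by simp
    also have "(1 - (s\<^sup>2)\<^sup>2)\<^sup>2 \<le> 2 * (1 - s\<^sup>2)" by (rule alg[OF s2])
    finally have "s\<^sup>2 \<le> 1 - C\<^sup>2 / 2" by simp
    then show ?thesis by (rule real_le_rsqrt)
  qed
  have ne: "cmod (inner_q n (product_amp n (\<lambda>_. 1) (\<lambda>_. 0)) \<psi>) \<in> S"
    unfolding S_def
    by (rule CollectI, rule exI[of _ "\<lambda>_. (1::complex)"], rule exI[of _ "\<lambda>_. (0::complex)"]) simp
  have Cb: "0 \<le> C" "C \<le> 1"
  proof -
    from el[OF ne] obtain s where "0 \<le> s" "0 \<le> C" "C \<le> 1 - s^4" by blast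
    moreover have "0 \<le> s^4" using \<open>0 \<le> s\<close> by simp
    ultimately show "0 \<le> C" "C \<le> 1" by linarith+
  qed
  have bdd: "bdd_above S" using el by (auto simp: bdd_above_def)
  have Lle: "Sup S \<le> sqrt (1 - C\<^sup>2 / 2)"
    using ne sq by (intro cSup_least) auto
  have L0: "0 \<le> Sup S" using el[OF ne] cSup_upper[OF ne bdd] by linarith
  have "C\<^sup>2 \<le> 1" using Cb by (simp add: power_le_one)
  then have y0: "0 \<le> 1 - C\<^sup>2 / 2" by simp
  have "(Sup S)\<^sup>2 \<le> (sqrt (1 - C\<^sup>2 / 2))\<^sup>2" using Lle L0 by (intro power_mono) auto
  then have "(Sup S)\<^sup>2 \<le> 1 - C\<^sup>2 / 2" using y0 by simp
  then show ?thesis using Lle unfolding geom_ent_def L C_def by simp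
qed

end
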